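(* Let $\alpha\colon\Gamma\curvearrowright X$ be an action of a countable group on a compact, Hausdorff, $0$-dimensional space, and assume there is no $\alpha$-invariant Radon probability measure on $X$. Then $\alpha$ has the dynamical comparison property if and only if $\alpha$ is minimal and $a\le b$ for all nonzero $a,b\in T(\alpha)$.
   Context: Clopen type semigroup: let $Y = X\times\mathbb N$, and let $\tilde\Gamma=\Gamma\times\mathfrak S$ ($\mathfrak S$ the permutation group of $\mathbb N$) act on $Y$ by $(\gamma,\sigma)(x,n)=(\alpha(\gamma)x,\sigma(n))$. A clopen $A\subseteq Y$ is bounded if $A\cap(X\times\{n\})=\emptyset$ for all large $n$. Bounded clopen $A,B$ are equidecomposable if there are clopen $A_1,\dots,A_n$ and $\tilde\gamma_i\in\tilde\Gamma$ with $A=\bigsqcup_i A_i$, $B=\bigsqcup_i\tilde\gamma_iA_i$. $T(\alpha)$ is the set of classes $[A]$, with $[A]+[B]=[A'\sqcup B']$ for disjoint representatives; $0=[\emptyset]$. $a\le b$ iff $b=a+c$ for some $c$. For clopen $A\subseteq X$, $[A]$ denotes $[A\times\{0\}]$. The action $\alpha$ has dynamical comparison if for all nonempty clopen $A,B\subseteq X$ such that $\mu(A)<\mu(B)$ for every $\alpha$-invariant Radon probability measure $\mu$ on $X$, one has $[A]\le[B]$. The action is minimal if every orbit is dense. *)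

theory Defs
  imports "HOL-Probability.Probability" "HOL-Algebra.Group_Action"
begin

text \<open>The space X is the type 'x (a t2_space, assumed compact and zero-dimensional).
  The group Gamma is a HOL-Algebra group G acting via alpha by homeomorphisms.\<close>

definition clopen_set :: "'a::topological_space set \<Rightarrow> bool" where
  "clopen_set A \<longleftrightarrow> open A \<and> closed A"

definition zero_dimensional :: "'a::topological_space itself \<Rightarrow> bool" where
  "zero_dimensional _ \<longleftrightarrow>
     (\<forall>U::'a set. \<forall>x\<in>U. open U \<longrightarrow> (\<exists>C. clopen_set C \<and> x \<in> C \<and> C \<subseteq> U))"

definition continuous_action :: "('g, 'b) monoid_scheme \<Rightarrow> ('g \<Rightarrow> 'x::topological_space \<Rightarrow> 'x) \<Rightarrow> bool" where
  "continuous_action G \<alpha> \<longleftrightarrow> group_action G UNIV \<alpha> \<and> (\<forall>g\<in>carrier G. continuous_on UNIV (\<alpha> g))"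

definition minimal_action :: "('g, 'b) monoid_scheme \<Rightarrow> ('g \<Rightarrow> 'x::topological_space \<Rightarrow> 'x) \<Rightarrow> bool" where
  "minimal_action G \<alpha> \<longleftrightarrow> (\<forall>x. closure ((\<lambda>g. \<alpha> g x) ` carrier G) = UNIV)"

definition radon_prob :: "'x::topological_space measure \<Rightarrow> bool" where
  "radon_prob M \<longleftrightarrow> prob_space M \<and> sets M = sets borel \<and>
     (\<forall>E\<in>sets borel. emeasure M E = (INF U\<in>{U. open U \<and> E \<subseteq> U}. emeasure M U)) \<and>
     (\<forall>U. open U \<longrightarrow> emeasure M U = (SUP K\<in>{K. compact K \<and> K \<subseteq> U}. emeasure M K))"

definition invariant_measure :: "('g, 'b) monoid_scheme \<Rightarrow> ('g \<Rightarrow> 'x::topological_space \<Rightarrow> 'x) \<Rightarrow> 'x measure \<Rightarrow> bool" where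
  "invariant_measure G \<alpha> M \<longleftrightarrow>
     (\<forall>g\<in>carrier G. \<forall>E\<in>sets M. emeasure M (\<alpha> g -` E) = emeasure M E)"

definition inv_radon_prob :: "('g, 'b) monoid_scheme \<Rightarrow> ('g \<Rightarrow> 'x::topological_space \<Rightarrow> 'x) \<Rightarrow> 'x measure \<Rightarrow> bool" where
  "inv_radon_prob G \<alpha> M \<longleftrightarrow> radon_prob M \<and> invariant_measure G \<alpha> M"

text \<open>Y = X \<times> nat (nat discrete); bounded clopen subsets of Y.\<close>
definition bounded_clopen :: "('x::topological_space \<times> nat) set \<Rightarrow> bool" where
  "bounded_clopen A \<longleftrightarrow> clopen_set A \<and> (\<exists>N. \<forall>x n. n \<ge> N \<longrightarrow> (x, n) \<notin> A)"

definition tact :: "('g \<Rightarrow> 'x \<Rightarrow> 'x) \<Rightarrow> 'g \<Rightarrow> (nat \<Rightarrow> nat) \<Rightarrow> 'x \<times> nat \<Rightarrow> 'x \<times> nat" where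
  "tact \<alpha> g \<sigma> = (\<lambda>(x, n). (\<alpha> g x, \<sigma> n))"

definition equidec :: "('g, 'b) monoid_scheme \<Rightarrow> ('g \<Rightarrow> 'x::topological_space \<Rightarrow> 'x)
    \<Rightarrow> ('x \<times> nat) set \<Rightarrow> ('x \<times> nat) set \<Rightarrow> bool" where
  "equidec G \<alpha> A B \<longleftrightarrow> bounded_clopen A \<and> bounded_clopen B \<and>
     (\<exists>(k::nat) (P :: nat \<Rightarrow> ('x \<times> nat) set) (g :: nat \<Rightarrow> 'g) (\<sigma> :: nat \<Rightarrow> nat \<Rightarrow> nat).
        (\<forall>i<k. clopen_set (P i) \<and> g i \<in> carrier G \<and> bij (\<sigma> i)) \<and>
        disjoint_family_on P {..<k} \<and> A = (\<Union>i<k. P i) \<and>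
        disjoint_family_on (\<lambda>i. tact \<alpha> (g i) (\<sigma> i) ` P i) {..<k} \<and>
        B = (\<Union>i<k. tact \<alpha> (g i) (\<sigma> i) ` P i))"

text \<open>Order on T(alpha) in terms of representatives: [A] \<le> [B] iff [B] = [A] + [C] for some
  bounded clopen C, where [A] + [C] = [A' \<union> C'] for disjoint representatives.\<close>
definition type_le :: "('g, 'b) monoid_scheme \<Rightarrow> ('g \<Rightarrow> 'x::topological_space \<Rightarrow> 'x)
    \<Rightarrow> ('x \<times> nat) set \<Rightarrow> ('x \<times> nat) set \<Rightarrow> bool" where
  "type_le G \<alpha> A B \<longleftrightarrow> (\<exists>C A' C'. bounded_clopen C \<and> equidec G \<alpha> A A' \<and> equidec G \<alpha> C C' \<and>
      A' \<inter> C' = {} \<and> equidec G \<alpha> B (A' \<union> C'))"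

text \<open>Element of T(alpha): class of a bounded clopen set; zero is the class of the empty set.\<close>
definition type_zero :: "('g, 'b) monoid_scheme \<Rightarrow> ('g \<Rightarrow> 'x::topological_space \<Rightarrow> 'x)
    \<Rightarrow> ('x \<times> nat) set \<Rightarrow> bool" where
  "type_zero G \<alpha> A \<longleftrightarrow> equidec G \<alpha> A {}"

definition dynamical_comparison :: "('g, 'b) monoid_scheme \<Rightarrow> ('g \<Rightarrow> 'x::topological_space \<Rightarrow> 'x) \<Rightarrow> bool" where
  "dynamical_comparison G \<alpha> \<longleftrightarrow>
     (\<forall>A B :: 'x set. clopen_set A \<and> clopen_set B \<and> A \<noteq> {} \<and> B \<noteq> {} \<and>
        (\<forall>\<mu>. inv_radon_prob G \<alpha> \<mu> \<longrightarrow> measure \<mu> A < measure \<mu> B)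
        \<longrightarrow> type_le G \<alpha> (A \<times> {0}) (B \<times> {0}))"

end

theory Submission
  imports Defs
begin


lemma clopen_Int: "clopen_set A \<Longrightarrow> clopen_set B \<Longrightarrow> clopen_set (A \<inter> B)"
  by (auto simp: clopen_set_def)
lemma clopen_Un: "clopen_set A \<Longrightarrow> clopen_set B \<Longrightarrow> clopen_set (A \<union> B)"
  by (auto simp: clopen_set_def)
lemma clopen_Diff: "clopen_set A \<Longrightarrow> clopen_set B \<Longrightarrow> clopen_set (A - B)"
  by (auto simp: clopen_set_def)
lemma clopen_empty[simp]: "clopen_set {}" and clopen_UNIV[simp]: "clopen_set UNIV"
  by (auto simp: clopen_set_def)
lemma clopen_Compl: "clopen_set A \<Longrightarrow> clopen_set (- A)"
  by (auto simp: clopen_set_def)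
lemma clopen_UN: "finite I \<Longrightarrow> (\<And>i. i \<in> I \<Longrightarrow> clopen_set (f i)) \<Longrightarrow> clopen_set (\<Union>i\<in>I. f i)"
  by (induction I rule: finite_induct) (auto intro: clopen_Un)
lemma clopen_vimage: "continuous_on UNIV f \<Longrightarrow> clopen_set A \<Longrightarrow> clopen_set (f -` A)"
  by (auto simp: clopen_set_def intro: open_vimage closed_vimage)
lemma clopen_Times: "clopen_set (A::'a::topological_space set) \<Longrightarrow> clopen_set (B :: 'b::topological_space set) \<Longrightarrow> clopen_set (A \<times> B)"
  by (auto simp: clopen_set_def intro: open_Times closed_Times)
lemma clopen_nat: "finite (N::nat set) \<Longrightarrow> clopen_set N"
  by (auto simp: clopen_set_def discrete_topology_class.open_discrete finite_imp_closed)

lemma bounded_sub: "bounded_clopen B \<Longrightarrow> A \<subseteq> B \<Longrightarrow> clopen_set A \<Longrightarrow> bounded_clopen A"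
  unfolding bounded_clopen_def by blast
lemma bounded_Un: "bounded_clopen A \<Longrightarrow> bounded_clopen B \<Longrightarrow> bounded_clopen (A \<union> B)"
  unfolding bounded_clopen_def
  apply (auto intro: clopen_Un)
  by (metis max.bounded_iff)
lemma bounded_Diff: "bounded_clopen A \<Longrightarrow> clopen_set B \<Longrightarrow> bounded_clopen (A - B)"
  unfolding bounded_clopen_def by (auto intro: clopen_Diff)
lemma bounded_empty[simp]: "bounded_clopen {}"
  unfolding bounded_clopen_def by auto
lemma bounded_layers: "clopen_set D \<Longrightarrow> bounded_clopen (D \<times> {..<n})"
  unfolding bounded_clopen_def by (auto intro!: clopen_Times clopen_nat exI[of _ n])
lemma bounded_layer: "clopen_set D \<Longrightarrow> bounded_clopen (D \<times> {n})"
  unfolding bounded_clopen_def by (auto intro!: clopen_Times clopen_nat exI[of _ "Suc n"])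

locale dyn =
  fixes G :: "('g,'b) monoid_scheme" and \<alpha> :: "'g \<Rightarrow> 'x::topological_space \<Rightarrow> 'x"
  assumes act: "group_action G UNIV \<alpha>"
  and cont: "\<And>g. g \<in> carrier G \<Longrightarrow> continuous_on UNIV (\<alpha> g)"
begin

lemma grp: "group G"
  using act unfolding group_action_def group_hom_def by blast

lemma comp: "g \<in> carrier G \<Longrightarrow> h \<in> carrier G \<Longrightarrow> \<alpha> (g \<otimes>\<^bsub>G\<^esub> h) x = \<alpha> g (\<alpha> h x)"
  using group_action.composition_rule[OF act] by blast

lemma one: "\<alpha> \<one>\<^bsub>G\<^esub> x = x"
  using group_action.id_eq_one[OF act] by (metis restrict_apply' UNIV_I)

lemma inv1: "g \<in> carrier G \<Longrightarrow> \<alpha> (inv\<^bsub>G\<^esub> g) (\<alpha> g x) = x"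
  by (metis comp one grp group.inv_closed group.l_inv)
lemma inv2: "g \<in> carrier G \<Longrightarrow> \<alpha> g (\<alpha> (inv\<^bsub>G\<^esub> g) x) = x"
  by (metis comp one grp group.inv_closed group.r_inv)

lemma tact_cont: "g \<in> carrier G \<Longrightarrow> continuous_on UNIV (tact \<alpha> g \<sigma>)"
proof -
  assume g: "g \<in> carrier G"
  have e: "tact \<alpha> g \<sigma> = (\<lambda>p. (\<alpha> g (fst p), \<sigma> (snd p)))"
    by (auto simp: tact_def)
  have c1: "continuous_on UNIV (\<lambda>p::'x\<times>nat. \<alpha> g (fst p))"
    by (rule continuous_on_compose2[OF cont[OF g] continuous_on_fst]) (auto intro: continuous_on_id)
  have c2: "continuous_on UNIV (\<lambda>p::'x\<times>nat. \<sigma> (snd p))"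
    by (rule continuous_on_compose2[OF Topological_Spaces.continuous_on_discrete continuous_on_snd]) (auto intro: continuous_on_id)
  show ?thesis unfolding e by (rule continuous_on_Pair[OF c1 c2])
qed

lemma tact_inv1: "g \<in> carrier G \<Longrightarrow> bij \<sigma> \<Longrightarrow> tact \<alpha> (inv\<^bsub>G\<^esub> g) (inv_into UNIV \<sigma>) (tact \<alpha> g \<sigma> p) = p"
  by (cases p) (auto simp: tact_def inv1 bij_def)
lemma tact_inv2: "g \<in> carrier G \<Longrightarrow> bij \<sigma> \<Longrightarrow> tact \<alpha> g \<sigma> (tact \<alpha> (inv\<^bsub>G\<^esub> g) (inv_into UNIV \<sigma>) p) = p"
  by (cases p) (auto simp: tact_def inv2 bij_def surj_f_inv_f)
lemma tact_comp: "g \<in> carrier G \<Longrightarrow> h \<in> carrier G \<Longrightarrow> tact \<alpha> h \<tau> (tact \<alpha> g \<sigma> p) = tact \<alpha> (h \<otimes>\<^bsub>G\<^esub> g) (\<tau> \<circ> \<sigma>) p"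
  by (cases p) (auto simp: tact_def comp)
lemma tact_inj: "g \<in> carrier G \<Longrightarrow> bij \<sigma> \<Longrightarrow> inj (tact \<alpha> g \<sigma>)"
  by (metis injI tact_inv1)
lemma tact_image: "g \<in> carrier G \<Longrightarrow> bij \<sigma> \<Longrightarrow> tact \<alpha> g \<sigma> ` P = tact \<alpha> (inv\<^bsub>G\<^esub> g) (inv_into UNIV \<sigma>) -` P"
  apply (auto simp: tact_inv1)
  by (metis image_eqI tact_inv2)
lemma clopen_tact: "g \<in> carrier G \<Longrightarrow> bij \<sigma> \<Longrightarrow> clopen_set P \<Longrightarrow> clopen_set (tact \<alpha> g \<sigma> ` P)"
  by (simp add: tact_image clopen_vimage tact_cont grp group.inv_closed)
lemma clopen_tact_vimage: "g \<in> carrier G \<Longrightarrow> clopen_set P \<Longrightarrow> clopen_set (tact \<alpha> g \<sigma> -` P)"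
  by (simp add: clopen_vimage tact_cont)


definition wit :: "('x \<times> nat) set \<Rightarrow> ('x \<times> nat \<Rightarrow> 'x \<times> nat) \<Rightarrow> (('x \<times> nat) set \<times> 'g \<times> (nat \<Rightarrow> nat)) set \<Rightarrow> bool" where
  "wit A \<phi> S \<longleftrightarrow> finite S \<and> A \<subseteq> \<Union>(fst ` S) \<and>
     (\<forall>(P,g,\<sigma>)\<in>S. clopen_set P \<and> g \<in> carrier G \<and> bij \<sigma> \<and> (\<forall>p\<in>P \<inter> A. \<phi> p = tact \<alpha> g \<sigma> p))"

definition pw :: "('x \<times> nat) set \<Rightarrow> ('x \<times> nat) set \<Rightarrow> bool" where
  "pw A B \<longleftrightarrow> bounded_clopen A \<and> bounded_clopen B \<and> (\<exists>\<phi> S. bij_betw \<phi> A B \<and> wit A \<phi> S)"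

lemma tact_one: "tact \<alpha> \<one>\<^bsub>G\<^esub> id p = p"
  by (cases p) (simp add: tact_def one)

lemma pw_refl: "bounded_clopen A \<Longrightarrow> pw A A"
  unfolding pw_def wit_def
  apply (intro conjI exI[of _ id] exI[of _ "{(UNIV, \<one>\<^bsub>G\<^esub>, id)}"])
  by (auto simp: tact_one monoid.one_closed[OF group.is_monoid[OF grp]])

lemma wit_mono: "wit A \<phi> S \<Longrightarrow> A' \<subseteq> A \<Longrightarrow> wit A' \<phi> S"
  unfolding wit_def by blast

lemma wit_image: "wit A \<phi> S \<Longrightarrow> A' \<subseteq> A \<Longrightarrow>
   \<phi> ` A' = (\<Union>(P,g,\<sigma>)\<in>S. tact \<alpha> g \<sigma> ` (P \<inter> A'))"
proof (rule equalityI; rule subsetI)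
  assume w: "wit A \<phi> S" and s: "A' \<subseteq> A"
  fix q assume "q \<in> \<phi> ` A'"
  then obtain p where p: "p \<in> A'" "q = \<phi> p" by blast
  then obtain t where t: "t \<in> S" "p \<in> fst t" using w s unfolding wit_def by blast
  obtain P g \<sigma> where tt: "t = (P,g,\<sigma>)" by (cases t)
  have "q = tact \<alpha> g \<sigma> p" using w t tt p s unfolding wit_def by fastforce
  then have "q \<in> tact \<alpha> g \<sigma> ` (P \<inter> A')" using p t tt by auto
  then show "q \<in> (\<Union>(P,g,\<sigma>)\<in>S. tact \<alpha> g \<sigma> ` (P \<inter> A'))" using t tt by blast
next
  assume w: "wit A \<phi> S" and s: "A' \<subseteq> A"
  fix q assume "q \<in> (\<Union>(P,g,\<sigma>)\<in>S. tact \<alpha> g \<sigma> ` (P \<inter> A'))"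
  then obtain P g \<sigma> p where t: "(P,g,\<sigma>) \<in> S" "p \<in> P" "p \<in> A'" "q = tact \<alpha> g \<sigma> p" by blast
  have "\<phi> p = tact \<alpha> g \<sigma> p" using w t s unfolding wit_def by fastforce
  then show "q \<in> \<phi> ` A'" using t by (metis image_eqI)
qed

lemma wit_image_clopen: "wit A \<phi> S \<Longrightarrow> A' \<subseteq> A \<Longrightarrow> clopen_set A' \<Longrightarrow> clopen_set (\<phi> ` A')"
  apply (subst wit_image, assumption, assumption)
  apply (rule clopen_UN)
  using wit_def apply blast
  unfolding wit_def by (auto intro!: clopen_tact clopen_Int)

lemma pw_restrict: "pw A B \<Longrightarrow> A' \<subseteq> A \<Longrightarrow> clopen_set A' \<Longrightarrow> \<exists>B' \<subseteq> B. pw A' B'"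
proof -
  assume pw: "pw A B" and sub: "A' \<subseteq> A" and c: "clopen_set A'"
  then obtain \<phi> S where b: "bij_betw \<phi> A B" and w: "wit A \<phi> S" and bA: "bounded_clopen A" and bB: "bounded_clopen B"
    unfolding pw_def by blast
  have im: "\<phi> ` A' \<subseteq> B" using b sub by (auto simp: bij_betw_def)
  have "pw A' (\<phi> ` A')"
    unfolding pw_def
  proof (intro conjI exI)
    show "bounded_clopen A'" using bA sub c by (rule bounded_sub)
    show "bounded_clopen (\<phi> ` A')" using bB im wit_image_clopen[OF w sub c] by (rule bounded_sub)
    show "bij_betw \<phi> A' (\<phi> ` A')" using b sub by (meson bij_betw_def bij_betw_subset)
    show "wit A' \<phi> S" using w sub by (rule wit_mono)
  qed
  then show ?thesis using im by blast
qed

lemma pw_sym: "pw A B \<Longrightarrow> pw B A"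
proof -
  assume "pw A B"
  then obtain \<phi> S where b: "bij_betw \<phi> A B" and w: "wit A \<phi> S" and bA: "bounded_clopen A" and bB: "bounded_clopen B"
    unfolding pw_def by blast
  define S' where "S' = (\<lambda>(P,g,\<sigma>). (tact \<alpha> g \<sigma> ` (P \<inter> A), inv\<^bsub>G\<^esub> g, inv_into UNIV \<sigma>)) ` S"
  have cA: "clopen_set A" using bA bounded_clopen_def by blast
  have "wit B (inv_into A \<phi>) S'"
    unfolding wit_def
  proof (intro conjI)
    show "finite S'" using w unfolding S'_def wit_def by auto
    show "B \<subseteq> \<Union> (fst ` S')"
    proof
      fix q assume "q \<in> B"
      then obtain p where p: "p \<in> A" "q = \<phi> p" using b by (auto simp: bij_betw_def)
      then obtain P g \<sigma> where t: "(P,g,\<sigma>) \<in> S" "p \<in> P" using w unfolding wit_def by fastforce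
      then have "q = tact \<alpha> g \<sigma> p" using w p unfolding wit_def by fastforce
      then have "q \<in> fst ((\<lambda>(P,g,\<sigma>). (tact \<alpha> g \<sigma> ` (P \<inter> A), inv\<^bsub>G\<^esub> g, inv_into UNIV \<sigma>)) (P,g,\<sigma>))"
        using t p by auto
      then show "q \<in> \<Union> (fst ` S')" unfolding S'_def using t(1) by blast
    qed
    show "\<forall>(P', h, \<tau>)\<in>S'. clopen_set P' \<and> h \<in> carrier G \<and> bij \<tau> \<and> (\<forall>q\<in>P' \<inter> B. inv_into A \<phi> q = tact \<alpha> h \<tau> q)"
    proof (clarsimp simp: S'_def)
      fix P g \<sigma> assume t: "(P,g,\<sigma>) \<in> S"
      have g: "g \<in> carrier G" "bij \<sigma>" "clopen_set P" and eq: "\<forall>p\<in>P \<inter> A. \<phi> p = tact \<alpha> g \<sigma> p"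
        using w t unfolding wit_def by fastforce+
      show "clopen_set (tact \<alpha> g \<sigma> ` (P \<inter> A)) \<and> inv\<^bsub>G\<^esub> g \<in> carrier G \<and> bij (inv_into UNIV \<sigma>) \<and>
          (\<forall>q\<in>tact \<alpha> g \<sigma> ` (P \<inter> A) \<inter> B. inv_into A \<phi> q = tact \<alpha> (inv\<^bsub>G\<^esub> g) (inv_into UNIV \<sigma>) q)"
      proof (intro conjI ballI)
        show "clopen_set (tact \<alpha> g \<sigma> ` (P \<inter> A))" using g cA by (intro clopen_tact clopen_Int) auto
        show "inv\<^bsub>G\<^esub> g \<in> carrier G" using g grp by (simp add: group.inv_closed)
        show "bij (inv_into UNIV \<sigma>)" using g by (simp add: bij_imp_bij_inv)
        fix q assume "q \<in> tact \<alpha> g \<sigma> ` (P \<inter> A) \<inter> B"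
        then obtain p where p: "p \<in> P" "p \<in> A" "q = tact \<alpha> g \<sigma> p" by auto
        then have "q = \<phi> p" using eq by auto
        then have "inv_into A \<phi> q = p" using b p by (simp add: bij_betw_def inv_into_f_f)
        then show "inv_into A \<phi> q = tact \<alpha> (inv\<^bsub>G\<^esub> g) (inv_into UNIV \<sigma>) q"
          using p g tact_inv1 by simp
      qed
    qed
  qed
  then show "pw B A" unfolding pw_def using bA bB b bij_betw_inv_into by blast
qed

end

context dyn begin

lemma witD: "wit A \<phi> S \<Longrightarrow> (P,g,\<sigma>) \<in> S \<Longrightarrow> clopen_set P \<and> g \<in> carrier G \<and> bij \<sigma> \<and> (\<forall>p\<in>P \<inter> A. \<phi> p = tact \<alpha> g \<sigma> p)"
  unfolding wit_def by blast
lemma witC: "wit A \<phi> S \<Longrightarrow> p \<in> A \<Longrightarrow> \<exists>P g \<sigma>. (P,g,\<sigma>) \<in> S \<and> p \<in> P"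
  unfolding wit_def by force

lemma pw_trans: "pw A B \<Longrightarrow> pw B C \<Longrightarrow> pw A C"
proof -
  assume "pw A B" "pw B C"
  then obtain \<phi> S \<psi> S2 where b1: "bij_betw \<phi> A B" and w1: "wit A \<phi> S" and bA: "bounded_clopen A"
    and b2: "bij_betw \<psi> B C" and w2: "wit B \<psi> S2" and bC: "bounded_clopen C"
    unfolding pw_def by blast
  define T where "T = (\<lambda>((P,g,\<sigma>),(Q,h,\<tau>)). (P \<inter> tact \<alpha> g \<sigma> -` Q, h \<otimes>\<^bsub>G\<^esub> g, \<tau> \<circ> \<sigma>)) ` (S \<times> S2)"
  have "wit A (\<psi> \<circ> \<phi>) T"
    unfolding wit_def
  proof (intro conjI)
    show "finite T" using w1 w2 unfolding T_def wit_def by auto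
    show "A \<subseteq> \<Union> (fst ` T)"
    proof
      fix p assume p: "p \<in> A"
      then obtain P g \<sigma> where t: "(P,g,\<sigma>) \<in> S" "p \<in> P" using w1 witC by blast
      then have e: "\<phi> p = tact \<alpha> g \<sigma> p" using w1 p witD by blast
      have "\<phi> p \<in> B" using b1 p by (auto simp: bij_betw_def)
      then obtain Q h \<tau> where u: "(Q,h,\<tau>) \<in> S2" "\<phi> p \<in> Q" using w2 witC by blast
      have "p \<in> fst ((\<lambda>((P,g,\<sigma>),(Q,h,\<tau>)). (P \<inter> tact \<alpha> g \<sigma> -` Q, h \<otimes>\<^bsub>G\<^esub> g, \<tau> \<circ> \<sigma>)) ((P,g,\<sigma>),(Q,h,\<tau>)))"
        using t u e by simp
      then show "p \<in> \<Union> (fst ` T)" unfolding T_def using t u by blast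
    qed
    show "\<forall>(P', h', \<tau>')\<in>T. clopen_set P' \<and> h' \<in> carrier G \<and> bij \<tau>' \<and> (\<forall>p\<in>P' \<inter> A. (\<psi> \<circ> \<phi>) p = tact \<alpha> h' \<tau>' p)"
    proof (clarsimp simp: T_def)
      fix P g \<sigma> Q h \<tau> assume t: "(P,g,\<sigma>) \<in> S" and u: "(Q,h,\<tau>) \<in> S2"
      have g: "g \<in> carrier G" "bij \<sigma>" "clopen_set P" and eq: "\<forall>p\<in>P \<inter> A. \<phi> p = tact \<alpha> g \<sigma> p"
        using witD[OF w1 t] by blast+
      have h: "h \<in> carrier G" "bij \<tau>" "clopen_set Q" and eq2: "\<forall>p\<in>Q \<inter> B. \<psi> p = tact \<alpha> h \<tau> p"
        using witD[OF w2 u] by blast+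
      show "clopen_set (P \<inter> tact \<alpha> g \<sigma> -` Q) \<and> h \<otimes>\<^bsub>G\<^esub> g \<in> carrier G \<and> bij (\<tau> \<circ> \<sigma>) \<and>
         (\<forall>p\<in>P \<inter> tact \<alpha> g \<sigma> -` Q \<inter> A. \<psi> (\<phi> p) = tact \<alpha> (h \<otimes>\<^bsub>G\<^esub> g) (\<tau> \<circ> \<sigma>) p)"
      proof (intro conjI ballI)
        show "clopen_set (P \<inter> tact \<alpha> g \<sigma> -` Q)" using g h by (intro clopen_Int clopen_tact_vimage)
        show "h \<otimes>\<^bsub>G\<^esub> g \<in> carrier G" using g h grp by (simp add: group.is_monoid monoid.m_closed)
        show "bij (\<tau> \<circ> \<sigma>)" using g h by (simp add: bij_comp)
        fix p assume p: "p \<in> P \<inter> tact \<alpha> g \<sigma> -` Q \<inter> A"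
        then have e: "\<phi> p = tact \<alpha> g \<sigma> p" using eq by blast
        have "\<phi> p \<in> B" using b1 p by (auto simp: bij_betw_def)
        then have "\<psi> (\<phi> p) = tact \<alpha> h \<tau> (\<phi> p)" using eq2 p e by auto
        then show "\<psi> (\<phi> p) = tact \<alpha> (h \<otimes>\<^bsub>G\<^esub> g) (\<tau> \<circ> \<sigma>) p" using e tact_comp g h by simp
      qed
    qed
  qed
  moreover have "bij_betw (\<psi> \<circ> \<phi>) A C" using b1 b2 by (rule bij_betw_trans)
  ultimately show "pw A C" unfolding pw_def using bA bC by blast
qed

lemma pw_union: "pw A1 B1 \<Longrightarrow> pw A2 B2 \<Longrightarrow> A1 \<inter> A2 = {} \<Longrightarrow> B1 \<inter> B2 = {} \<Longrightarrow> pw (A1 \<union> A2) (B1 \<union> B2)"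
proof -
  assume "pw A1 B1" "pw A2 B2" and d1: "A1 \<inter> A2 = {}" and d2: "B1 \<inter> B2 = {}"
  then obtain \<phi> S \<psi> S2 where b1: "bij_betw \<phi> A1 B1" and w1: "wit A1 \<phi> S" and bA1: "bounded_clopen A1"
    and b2: "bij_betw \<psi> A2 B2" and w2: "wit A2 \<psi> S2" and bA2: "bounded_clopen A2"
    and bB1: "bounded_clopen B1" and bB2: "bounded_clopen B2"
    unfolding pw_def by blast
  define ch where "ch p = (if p \<in> A1 then \<phi> p else \<psi> p)" for p
  define T where "T = (\<lambda>(P,g,\<sigma>). (P \<inter> A1, g, \<sigma>)) ` S \<union> (\<lambda>(P,g,\<sigma>). (P \<inter> A2, g, \<sigma>)) ` S2"
  have c1: "clopen_set A1" "clopen_set A2" using bA1 bA2 bounded_clopen_def by auto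
  have "wit (A1 \<union> A2) ch T"
    unfolding wit_def
  proof (intro conjI)
    show "finite T" using w1 w2 unfolding T_def wit_def by auto
    show "A1 \<union> A2 \<subseteq> \<Union> (fst ` T)"
    proof
      fix p assume "p \<in> A1 \<union> A2"
      then show "p \<in> \<Union> (fst ` T)"
      proof
        assume p: "p \<in> A1"
        then obtain P g \<sigma> where t: "(P,g,\<sigma>) \<in> S" "p \<in> P" using w1 witC by blast
        then have "(P \<inter> A1, g, \<sigma>) \<in> T" unfolding T_def by force
        then show ?thesis using t p by force
      next
        assume p: "p \<in> A2"
        then obtain P g \<sigma> where t: "(P,g,\<sigma>) \<in> S2" "p \<in> P" using w2 witC by blast
        then have "(P \<inter> A2, g, \<sigma>) \<in> T" unfolding T_def by force
        then show ?thesis using t p by force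
      qed
    qed
    show "\<forall>(P', h', \<tau>')\<in>T. clopen_set P' \<and> h' \<in> carrier G \<and> bij \<tau>' \<and> (\<forall>p\<in>P' \<inter> (A1 \<union> A2). ch p = tact \<alpha> h' \<tau>' p)"
    proof -
      have part1: "clopen_set (P \<inter> A1) \<and> g \<in> carrier G \<and> bij \<sigma> \<and> (\<forall>p\<in>P \<inter> A1 \<inter> (A1 \<union> A2). ch p = tact \<alpha> g \<sigma> p)"
        if t: "(P,g,\<sigma>) \<in> S" for P g \<sigma>
      proof -
        have g: "g \<in> carrier G" "bij \<sigma>" "clopen_set P" and eq: "\<forall>p\<in>P \<inter> A1. \<phi> p = tact \<alpha> g \<sigma> p"
          using witD[OF w1 t] by blast+
        show ?thesis using g c1 eq by (simp add: clopen_Int ch_def)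
      qed
      have part2: "clopen_set (P \<inter> A2) \<and> g \<in> carrier G \<and> bij \<sigma> \<and> (\<forall>p\<in>P \<inter> A2 \<inter> (A1 \<union> A2). ch p = tact \<alpha> g \<sigma> p)"
        if t: "(P,g,\<sigma>) \<in> S2" for P g \<sigma>
      proof -
        have g: "g \<in> carrier G" "bij \<sigma>" "clopen_set P" and eq: "\<forall>p\<in>P \<inter> A2. \<psi> p = tact \<alpha> g \<sigma> p"
          using witD[OF w2 t] by blast+
        have "\<forall>p\<in>P \<inter> A2 \<inter> (A1 \<union> A2). ch p = tact \<alpha> g \<sigma> p" using eq d1 by (auto simp: ch_def)
        then show ?thesis using g c1 by (simp add: clopen_Int)
      qed
      show ?thesis unfolding T_def using part1 part2 by fast
    qed
  qed
  moreover have "bij_betw ch (A1 \<union> A2) (B1 \<union> B2)"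
  proof (rule bij_betw_combine)
    show "bij_betw ch A1 B1" using b1 by (rule bij_betw_cong[THEN iffD1, rotated]) (simp add: ch_def)
    show "bij_betw ch A2 B2" using b2 d1 by (intro bij_betw_cong[THEN iffD1, OF _ b2]) (auto simp add: ch_def)
    show "B1 \<inter> B2 = {}" by (rule d2)
  qed
  ultimately show ?thesis unfolding pw_def using bA1 bA2 bB1 bB2 bounded_Un by blast
qed

end

context dyn begin

lemma equidec_pw: "equidec G \<alpha> A B \<Longrightarrow> pw A B"
proof -
  assume "equidec G \<alpha> A B"
  then have bA: "bounded_clopen A" and bB: "bounded_clopen B" and
    "\<exists>(k::nat) (P :: nat \<Rightarrow> ('x \<times> nat) set) (g :: nat \<Rightarrow> 'g) (\<sigma> :: nat \<Rightarrow> nat \<Rightarrow> nat).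
        (\<forall>i<k. clopen_set (P i) \<and> g i \<in> carrier G \<and> bij (\<sigma> i)) \<and>
        disjoint_family_on P {..<k} \<and> A = (\<Union>i<k. P i) \<and>
        disjoint_family_on (\<lambda>i. tact \<alpha> (g i) (\<sigma> i) ` P i) {..<k} \<and>
        B = (\<Union>i<k. tact \<alpha> (g i) (\<sigma> i) ` P i)"
    unfolding equidec_def by blast+
  then obtain k :: nat and P :: "nat \<Rightarrow> ('x \<times> nat) set" and g :: "nat \<Rightarrow> 'g" and \<sigma> :: "nat \<Rightarrow> nat \<Rightarrow> nat"
    where c: "\<forall>i<k. clopen_set (P i) \<and> g i \<in> carrier G \<and> bij (\<sigma> i)"
    and d1: "disjoint_family_on P {..<k}" and A: "A = (\<Union>i<k. P i)"
    and d2: "disjoint_family_on (\<lambda>i. tact \<alpha> (g i) (\<sigma> i) ` P i) {..<k}"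
    and B: "B = (\<Union>i<k. tact \<alpha> (g i) (\<sigma> i) ` P i)"
    by (elim exE conjE)
  define idx where "idx p = (SOME i. i < k \<and> p \<in> P i)" for p
  define \<phi> where "\<phi> p = tact \<alpha> (g (idx p)) (\<sigma> (idx p)) p" for p
  have idx: "idx p = i" if "i < k" "p \<in> P i" for i p
  proof -
    have "idx p < k \<and> p \<in> P (idx p)" unfolding idx_def by (rule someI[of _ i]) (use that in blast)
    then show ?thesis using d1 that unfolding disjoint_family_on_def by blast
  qed
  have phi: "\<phi> p = tact \<alpha> (g i) (\<sigma> i) p" if "i < k" "p \<in> P i" for i p
    using idx[OF that] by (simp add: \<phi>_def)
  define S where "S = (\<lambda>i. (P i, g i, \<sigma> i)) ` {..<k}"
  have w: "wit A \<phi> S"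
    unfolding wit_def
  proof (intro conjI)
    show "finite S" unfolding S_def by simp
    show "A \<subseteq> \<Union> (fst ` S)" unfolding S_def A by force
    show "\<forall>(P', h, \<tau>)\<in>S. clopen_set P' \<and> h \<in> carrier G \<and> bij \<tau> \<and> (\<forall>p\<in>P' \<inter> A. \<phi> p = tact \<alpha> h \<tau> p)"
      unfolding S_def using c phi by blast
  qed
  have inj: "inj_on \<phi> A"
  proof (rule inj_onI)
    fix p q assume "p \<in> A" "q \<in> A" and e: "\<phi> p = \<phi> q"
    then obtain i j where ij: "i < k" "p \<in> P i" "j < k" "q \<in> P j" unfolding A by auto
    show "p = q"
    proof (cases "i = j")
      case True
      then have "tact \<alpha> (g i) (\<sigma> i) p = tact \<alpha> (g i) (\<sigma> i) q" using e phi[of i p] phi[of j q] ij by simp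
      moreover have "inj (tact \<alpha> (g i) (\<sigma> i))" using c ij tact_inj by blast
      ultimately show ?thesis by (simp add: inj_eq)
    next
      case False
      have "\<phi> p \<in> tact \<alpha> (g i) (\<sigma> i) ` P i" "\<phi> q \<in> tact \<alpha> (g j) (\<sigma> j) ` P j"
        using phi[of i p] phi[of j q] ij by auto
      moreover have "tact \<alpha> (g i) (\<sigma> i) ` P i \<inter> tact \<alpha> (g j) (\<sigma> j) ` P j = {}"
        using d2 False ij unfolding disjoint_family_on_def by blast
      ultimately show ?thesis using e by (metis disjoint_iff)
    qed
  qed
  have img: "\<phi> ` A = B"
  proof -
    have "\<phi> ` A = (\<Union>i<k. \<phi> ` P i)" using A by blast
    also have "\<dots> = (\<Union>i<k. tact \<alpha> (g i) (\<sigma> i) ` P i)"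
      by (intro SUP_cong refl image_cong phi) auto
    finally show ?thesis using B by simp
  qed
  show "pw A B" unfolding pw_def bij_betw_def using bA bB inj img w by blast
qed

lemma pw_equidec: "pw A B \<Longrightarrow> equidec G \<alpha> A B"
proof -
  assume "pw A B"
  then obtain \<phi> S where b: "bij_betw \<phi> A B" and w: "wit A \<phi> S" and bA: "bounded_clopen A" and bB: "bounded_clopen B"
    unfolding pw_def by blast
  have "finite S" using w unfolding wit_def by blast
  then obtain n :: nat and f where Sf: "S = f ` {i. i < n}" using finite_imp_nat_seg_image_inj_on by blast
  define Pf where "Pf i = fst (f i)" for i
  define gf where "gf i = fst (snd (f i))" for i
  define sf where "sf i = snd (snd (f i))" for i
  have fi: "(Pf i, gf i, sf i) \<in> S" if "i < n" for i using Sf that by (simp add: Pf_def gf_def sf_def)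
  have wf: "clopen_set (Pf i) \<and> gf i \<in> carrier G \<and> bij (sf i) \<and> (\<forall>p\<in>Pf i \<inter> A. \<phi> p = tact \<alpha> (gf i) (sf i) p)"
    if "i < n" for i using witD[OF w fi[OF that]] .
  have cA: "clopen_set A" using bA unfolding bounded_clopen_def by blast
  define Q where "Q i = (Pf i \<inter> A) - (\<Union>j<i. Pf j)" for i
  have Qc: "clopen_set (Q i)" if "i < n" for i
    unfolding Q_def using wf that cA by (intro clopen_Diff clopen_Int clopen_UN) auto
  have QA: "Q i \<subseteq> Pf i \<inter> A" for i unfolding Q_def by blast
  have Qlt: "Q i \<inter> Q j = {}" if "i < j" for i j
    using QA[of i] that unfolding Q_def by blast
  have dQ: "disjoint_family_on Q {..<n}"
    unfolding disjoint_family_on_def by (metis Qlt Int_commute linorder_neqE_nat)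
  have AQ: "A = (\<Union>i<n. Q i)"
  proof (rule equalityI; rule subsetI)
    fix p assume p: "p \<in> A"
    then obtain P0 g0 s0 where t: "(P0,g0,s0) \<in> S" "p \<in> P0" using witC[OF w] by blast
    then obtain i where i: "i < n" "(P0,g0,s0) = f i" using Sf by blast
    then have pi: "p \<in> Pf i" using t unfolding Pf_def by (metis fst_conv)
    define m where "m = (LEAST i. p \<in> Pf i)"
    have m1: "p \<in> Pf m" unfolding m_def by (rule LeastI[of "\<lambda>i. p \<in> Pf i" i, OF pi])
    have m2: "m \<le> i" unfolding m_def by (rule Least_le[of "\<lambda>i. p \<in> Pf i" i, OF pi])
    have "\<forall>j<m. p \<notin> Pf j" unfolding m_def using not_less_Least by blast
    then have "p \<in> Q m" using m1 p unfolding Q_def by blast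
    moreover have "m < n" using m2 i by simp
    ultimately show "p \<in> (\<Union>i<n. Q i)" by blast
  next
    fix p assume "p \<in> (\<Union>i<n. Q i)" then show "p \<in> A" using QA by blast
  qed
  have imgQ: "tact \<alpha> (gf i) (sf i) ` Q i = \<phi> ` Q i" if "i < n" for i
  proof (intro image_cong refl)
    fix x assume "x \<in> Q i"
    then have "x \<in> Pf i \<inter> A" using QA[of i] by blast
    then show "tact \<alpha> (gf i) (sf i) x = \<phi> x" using wf[OF that] by simp
  qed
  have inj: "inj_on \<phi> A" using b unfolding bij_betw_def by blast
  have dI: "disjoint_family_on (\<lambda>i. tact \<alpha> (gf i) (sf i) ` Q i) {..<n}"
    unfolding disjoint_family_on_def
  proof (intro ballI impI)
    fix i j assume ij: "i \<in> {..<n}" "j \<in> {..<n}" "i \<noteq> j"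
    have "Q i \<inter> Q j = {}" using dQ ij unfolding disjoint_family_on_def by blast
    then have "\<phi> ` Q i \<inter> \<phi> ` Q j = {}" using inj QA[of i] QA[of j]
      unfolding inj_on_def by blast
    then show "tact \<alpha> (gf i) (sf i) ` Q i \<inter> tact \<alpha> (gf j) (sf j) ` Q j = {}" using imgQ ij by simp
  qed
  have BQ: "B = (\<Union>i<n. tact \<alpha> (gf i) (sf i) ` Q i)"
  proof -
    have "B = \<phi> ` A" using b unfolding bij_betw_def by simp
    also have "\<dots> = (\<Union>i<n. \<phi> ` Q i)" using AQ by blast
    also have "\<dots> = (\<Union>i<n. tact \<alpha> (gf i) (sf i) ` Q i)" using imgQ by simp
    finally show ?thesis .
  qed
  show "equidec G \<alpha> A B"
    unfolding equidec_def
    apply (intro conjI bA bB exI[of _ n] exI[of _ Q] exI[of _ gf] exI[of _ sf])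
    using Qc wf dQ AQ dI BQ by auto
qed

definition le :: "('x \<times> nat) set \<Rightarrow> ('x \<times> nat) set \<Rightarrow> bool" where
  "le A B \<longleftrightarrow> bounded_clopen B \<and> (\<exists>B' \<subseteq> B. pw A B')"

lemma pw_le: "pw A B \<Longrightarrow> le A B"
  unfolding le_def pw_def by blast
lemma le_bounded: "le A B \<Longrightarrow> bounded_clopen A"
  unfolding le_def pw_def by blast
lemma sub_le: "bounded_clopen B \<Longrightarrow> A \<subseteq> B \<Longrightarrow> clopen_set A \<Longrightarrow> le A B"
  unfolding le_def using pw_refl bounded_sub by blast
lemma le_trans: "le A B \<Longrightarrow> le B C \<Longrightarrow> le A C"
proof -
  assume "le A B" "le B C"
  then obtain B1 C1 where s1: "B1 \<subseteq> B" and p1: "pw A B1" and s2: "C1 \<subseteq> C" and p2: "pw B C1" and bC: "bounded_clopen C"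
    unfolding le_def by blast
  have "clopen_set B1" using p1 unfolding pw_def bounded_clopen_def by blast
  then obtain C2 where s3: "C2 \<subseteq> C1" and p3: "pw B1 C2" using pw_restrict[OF p2 s1] by blast
  have "pw A C2" using pw_trans[OF p1 p3] .
  moreover have "C2 \<subseteq> C" using s2 s3 by (rule subset_trans[rotated])
  ultimately show "le A C" unfolding le_def using bC by blast
qed

lemma le_union: "le A1 B1 \<Longrightarrow> le A2 B2 \<Longrightarrow> A1 \<inter> A2 = {} \<Longrightarrow> B1 \<inter> B2 = {} \<Longrightarrow> le (A1 \<union> A2) (B1 \<union> B2)"
proof -
  assume "le A1 B1" "le A2 B2" and d: "A1 \<inter> A2 = {}" "B1 \<inter> B2 = {}"
  then obtain C1 C2 where s1: "C1 \<subseteq> B1" and p1: "pw A1 C1" and s2: "C2 \<subseteq> B2" and p2: "pw A2 C2"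
     and b1: "bounded_clopen B1" and b2: "bounded_clopen B2"
    unfolding le_def by blast
  have "C1 \<inter> C2 = {}" using d(2) s1 s2 by blast
  then have "pw (A1 \<union> A2) (C1 \<union> C2)" using pw_union[OF p1 p2 d(1)] by blast
  moreover have "C1 \<union> C2 \<subseteq> B1 \<union> B2" using s1 s2 by blast
  moreover have "bounded_clopen (B1 \<union> B2)" using b1 b2 by (rule bounded_Un)
  ultimately show ?thesis unfolding le_def by blast
qed

lemma type_le_le: "type_le G \<alpha> A B \<Longrightarrow> le A B"
proof -
  assume "type_le G \<alpha> A B"
  then obtain C A' C' where e1: "equidec G \<alpha> A A'" and d: "A' \<inter> C' = {}" and e3: "equidec G \<alpha> B (A' \<union> C')"
    unfolding type_le_def by blast
  have p1: "pw A A'" using equidec_pw[OF e1] .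
  have p3: "pw B (A' \<union> C')" using equidec_pw[OF e3] .
  have "clopen_set A'" using p1 unfolding pw_def bounded_clopen_def by blast
  then obtain B' where s: "B' \<subseteq> B" and p4: "pw A' B'" using pw_restrict[OF pw_sym[OF p3], of A'] by blast
  have "bounded_clopen B" using p3 unfolding pw_def by blast
  then show "le A B" unfolding le_def using pw_trans[OF p1 p4] s by blast
qed

lemma le_type_le: "le A B \<Longrightarrow> type_le G \<alpha> A B"
proof -
  assume "le A B"
  then obtain B' where s: "B' \<subseteq> B" and p: "pw A B'" and bB: "bounded_clopen B" unfolding le_def by blast
  have cB': "clopen_set B'" using p unfolding pw_def bounded_clopen_def by blast
  have bD: "bounded_clopen (B - B')" using bB cB' by (rule bounded_Diff)
  have u: "B' \<union> (B - B') = B" using s by blast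
  have e1: "equidec G \<alpha> A B'" using pw_equidec[OF p] .
  have e2: "equidec G \<alpha> (B - B') (B - B')" using pw_equidec[OF pw_refl[OF bD]] .
  have e3: "equidec G \<alpha> B (B' \<union> (B - B'))" unfolding u using pw_equidec[OF pw_refl[OF bB]] .
  have d: "B' \<inter> (B - B') = {}" by blast
  show ?thesis unfolding type_le_def using bD e1 e2 e3 d by blast
qed

end


context dyn begin

lemma type_zero_empty: "type_zero G \<alpha> A \<Longrightarrow> A = {}"
proof -
  assume "type_zero G \<alpha> A"
  then have "pw A {}" unfolding type_zero_def by (rule equidec_pw)
  then obtain \<phi> :: "'x \<times> nat \<Rightarrow> 'x \<times> nat" where "bij_betw \<phi> A {}" unfolding pw_def by blast
  then show "A = {}" unfolding bij_betw_def by blast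
qed

lemma shift_pw: "clopen_set D \<Longrightarrow> pw (D \<times> {m}) (D \<times> {n})"
proof -
  assume cD: "clopen_set D"
  define \<sigma> where "\<sigma> k = (if k = m then n else if k = n then m else k)" for k
  have inv: "\<sigma> (\<sigma> k) = k" for k unfolding \<sigma>_def by auto
  have bs: "bij \<sigma>" by (rule o_bij[of \<sigma>]) (auto simp: inv)
  have oneC: "\<one>\<^bsub>G\<^esub> \<in> carrier G" using monoid.one_closed[OF group.is_monoid[OF grp]] .
  have tf: "tact \<alpha> \<one>\<^bsub>G\<^esub> \<sigma> (x, k) = (x, \<sigma> k)" for x k by (simp add: tact_def local.one)
  have "bij_betw (tact \<alpha> \<one>\<^bsub>G\<^esub> \<sigma>) (D \<times> {m}) (D \<times> {n})"
    unfolding bij_betw_def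
  proof
    show "inj_on (tact \<alpha> \<one>\<^bsub>G\<^esub> \<sigma>) (D \<times> {m})" using tact_inj[OF oneC bs] by (rule inj_on_subset) simp
    show "tact \<alpha> \<one>\<^bsub>G\<^esub> \<sigma> ` (D \<times> {m}) = D \<times> {n}" by (auto simp: tf \<sigma>_def image_iff)
  qed
  moreover have "wit (D \<times> {m}) (tact \<alpha> \<one>\<^bsub>G\<^esub> \<sigma>) {(UNIV, \<one>\<^bsub>G\<^esub>, \<sigma>)}"
    unfolding wit_def using oneC bs by auto
  ultimately show ?thesis unfolding pw_def using bounded_layer[OF cD] by blast
qed

lemma slice_clopen: "clopen_set (B :: ('x \<times> nat) set) \<Longrightarrow> clopen_set {x. (x, m) \<in> B}"
proof -
  assume "clopen_set B"
  moreover have "continuous_on UNIV (\<lambda>x::'x. (x, m))"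
    by (intro continuous_on_Pair continuous_on_id continuous_on_const)
  ultimately have "clopen_set ((\<lambda>x::'x. (x, m)) -` B)" by (intro clopen_vimage)
  moreover have "(\<lambda>x::'x. (x, m)) -` B = {x. (x, m) \<in> B}" by auto
  ultimately show ?thesis by simp
qed

end


lemma singleton_measure:
  fixes \<alpha> :: "'g \<Rightarrow> 'x::topological_space \<Rightarrow> 'x" and G :: "('g, 'b) monoid_scheme"
  assumes all: "\<And>x y::'x. x = y"
  shows "inv_radon_prob G \<alpha> (return borel (undefined::'x))"
proof -
  define M where "M = return borel (undefined::'x)"
  have allopen: "open (E::'x set)" for E
  proof (cases "E = {}")
    case False
    then obtain e where e: "e \<in> E" by blast
    have "x \<in> E" for x using e all[of x e] by simp
    then have "E = UNIV" by blast
    then show ?thesis by simp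
  qed simp
  have sM: "sets M = sets borel" unfolding M_def by (rule sets_return)
  have inS: "E \<in> sets M" for E :: "'x set" unfolding sM using allopen by (rule borel_open)
  have fin: "finite (UNIV :: 'x set)"
  proof -
    have "(UNIV :: 'x set) \<subseteq> {undefined}" using all by blast
    then show ?thesis using finite_subset by blast
  qed
  have "radon_prob M"
    unfolding radon_prob_def
  proof (intro conjI ballI allI impI)
    show "prob_space M" unfolding M_def by (rule prob_space_return) simp
    show "sets M = sets borel" by (rule sM)
    fix E :: "'x set"
    show "emeasure M E = (INF U\<in>{U. open U \<and> E \<subseteq> U}. emeasure M U)"
    proof (rule antisym)
      show "(INF U\<in>{U. open U \<and> E \<subseteq> U}. emeasure M U) \<le> emeasure M E"
        by (rule INF_lower) (simp add: allopen)
      show "emeasure M E \<le> (INF U\<in>{U. open U \<and> E \<subseteq> U}. emeasure M U)"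
        by (rule INF_greatest) (auto intro: emeasure_mono inS)
    qed
  next
    fix U :: "'x set"
    show "emeasure M U = (SUP K\<in>{K. compact K \<and> K \<subseteq> U}. emeasure M K)"
    proof (rule antisym)
      have "compact U" using fin by (intro finite_imp_compact) (rule finite_subset[OF subset_UNIV])
      then show "emeasure M U \<le> (SUP K\<in>{K. compact K \<and> K \<subseteq> U}. emeasure M K)"
        by (intro SUP_upper) simp
      show "(SUP K\<in>{K. compact K \<and> K \<subseteq> U}. emeasure M K) \<le> emeasure M U"
        by (rule SUP_least) (auto intro: emeasure_mono inS)
    qed
  qed
  moreover have "invariant_measure G \<alpha> M"
    unfolding invariant_measure_def
  proof (intro ballI)
    fix g E
    have fx: "\<alpha> g x = x" for x by (rule all)
    have "\<alpha> g -` E = E" by (auto simp: fx)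
    then show "emeasure M (\<alpha> g -` E) = emeasure M E" by simp
  qed
  ultimately show ?thesis unfolding inv_radon_prob_def M_def by blast
qed

theorem lemmal:
  fixes G :: "('g, 'b) monoid_scheme" and \<alpha> :: "'g \<Rightarrow> 'x::t2_space \<Rightarrow> 'x"
  assumes "continuous_action G \<alpha>"
    and "countable (carrier G)"
    and "compact (UNIV :: 'x set)"
    and "zero_dimensional TYPE('x)"
    and "\<not> (\<exists>\<mu>. inv_radon_prob G \<alpha> \<mu>)"
  shows "dynamical_comparison G \<alpha> \<longleftrightarrow>
    (minimal_action G \<alpha> \<and>
     (\<forall>A B. bounded_clopen A \<and> bounded_clopen B \<and> \<not> type_zero G \<alpha> A \<and> \<not> type_zero G \<alpha> B
        \<longrightarrow> type_le G \<alpha> A B))"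
proof -
  interpret dyn G \<alpha>
    using assms(1) unfolding continuous_action_def by (intro dyn.intro) auto
  have nomeas: "\<And>\<mu>. \<not> inv_radon_prob G \<alpha> \<mu>" using assms(5) by blast
  have zd: "\<exists>C. clopen_set C \<and> x \<in> C \<and> C \<subseteq> U" if "open U" "x \<in> U" for U and x :: 'x
    using assms(4) that unfolding zero_dimensional_def by blast
  have nz: "\<not> type_zero G \<alpha> A" if "A \<noteq> {}" for A using type_zero_empty that by blast
  have zA: "A \<noteq> {}" if "\<not> type_zero G \<alpha> A" for A
  proof
    assume "A = {}"
    then have "type_zero G \<alpha> A" unfolding type_zero_def using pw_equidec[OF pw_refl[OF bounded_empty]] by simp
    then show False using that by blast
  qed
  show ?thesis
  proof
    assume DC: "dynamical_comparison G \<alpha>"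
    have DC': "le (A \<times> {0}) (B \<times> {0})" if "clopen_set A" "clopen_set B" "A \<noteq> {}" "B \<noteq> {}" for A B :: "'x set"
      using DC that nomeas unfolding dynamical_comparison_def by (intro type_le_le) blast
    have minimal: "minimal_action G \<alpha>"
      unfolding minimal_action_def
    proof (rule allI, rule ccontr)
      fix x :: 'x
      let ?O = "(\<lambda>g. \<alpha> g x) ` carrier G"
      assume ne: "closure ?O \<noteq> UNIV"
      then obtain y where y: "y \<notin> closure ?O" by blast
      have "open (- closure ?O)" by (intro open_Compl closed_closure)
      then obtain B where B: "clopen_set B" "y \<in> B" "B \<subseteq> - closure ?O" using zd y by blast
      have "B \<noteq> {}" using B(2) by blast
      then have "le (UNIV \<times> {0}) (B \<times> {0})" using DC'[OF clopen_UNIV B(1)] by simp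
      then obtain B' \<phi> S where s: "B' \<subseteq> B \<times> {0}" and b: "bij_betw \<phi> (UNIV \<times> {0}) B'" and w: "wit (UNIV \<times> {0}) \<phi> S"
        unfolding le_def pw_def by blast
      have x0: "(x, 0) \<in> (UNIV :: 'x set) \<times> {0::nat}" by simp
      obtain P g \<sigma> where t: "(P, g, \<sigma>) \<in> S" "(x, 0) \<in> P" using witC[OF w x0] by blast
      have wd: "clopen_set P \<and> g \<in> carrier G \<and> bij \<sigma> \<and> (\<forall>p\<in>P \<inter> UNIV \<times> {0}. \<phi> p = tact \<alpha> g \<sigma> p)"
        using witD[OF w t(1)] .
      have "\<phi> (x, 0) = tact \<alpha> g \<sigma> (x, 0)" using wd t(2) by blast
      then have e: "\<phi> (x, 0) = (\<alpha> g x, \<sigma> 0)" by (simp add: tact_def)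
      have "\<phi> (x, 0) \<in> B'" using b x0 unfolding bij_betw_def by blast
      then have "\<alpha> g x \<in> B" using s e by auto
      moreover have "\<alpha> g x \<in> closure ?O" using wd by (intro closure_subset[THEN subsetD]) auto
      ultimately show False using B(3) by blast
    qed
    have two: "\<exists>D :: 'x set. clopen_set D \<and> D \<noteq> {} \<and> - D \<noteq> {}"
    proof (cases "\<exists>x y::'x. x \<noteq> y")
      case True
      then obtain x y :: 'x where xy: "x \<noteq> y" by blast
      have "open (- {y})" by (simp add: open_Compl)
      then obtain C where "clopen_set C" "x \<in> C" "C \<subseteq> - {y}" using zd xy by blast
      then have "clopen_set C \<and> C \<noteq> {} \<and> - C \<noteq> {}" by blast
      then show ?thesis by blast
    next
      case False
      then have "\<And>x y::'x. x = y" by blast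
      then have "inv_radon_prob G \<alpha> (return borel (undefined::'x))" by (rule singleton_measure)
      then show ?thesis using nomeas by blast
    qed
    then obtain D :: "'x set" where D: "clopen_set D" "D \<noteq> {}" "- D \<noteq> {}" by blast
    have stack: "le (UNIV \<times> {..<n}) (UNIV \<times> {0})" for n
    proof (induction n)
      case 0
      show ?case by (rule sub_le[OF bounded_layer[OF clopen_UNIV]]) auto
    next
      case (Suc n)
      have a: "le (UNIV \<times> {..<n}) (D \<times> {0})" using le_trans[OF Suc.IH DC'[of UNIV D]] D by simp
      have b: "le (UNIV \<times> {n}) ((- D) \<times> {0})"
        using le_trans[OF pw_le[OF shift_pw[OF clopen_UNIV]] DC'[OF clopen_UNIV clopen_Compl[OF D(1)] _ D(3)]] by simp
      have "le (UNIV \<times> {..<n} \<union> UNIV \<times> {n}) (D \<times> {0} \<union> (- D) \<times> {0})" by (rule le_union[OF a b]) auto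
      moreover have "UNIV \<times> {..<n} \<union> UNIV \<times> {n} = (UNIV :: 'x set) \<times> {..<Suc n}" by auto
      moreover have "D \<times> {0} \<union> (- D) \<times> {0} = (UNIV :: 'x set) \<times> {0::nat}" by auto
      ultimately show ?case by simp
    qed
    have part2: "type_le G \<alpha> A B"
      if h: "bounded_clopen A" "bounded_clopen B" "\<not> type_zero G \<alpha> A" "\<not> type_zero G \<alpha> B" for A B
    proof -
      obtain N where N: "\<forall>x n. n \<ge> N \<longrightarrow> (x, n) \<notin> A" using h(1) unfolding bounded_clopen_def by blast
      have cA: "clopen_set A" and cB: "clopen_set B" using h(1,2) unfolding bounded_clopen_def by blast+
      have "A \<subseteq> UNIV \<times> {..<N}"
      proof
        fix p assume "p \<in> A"
        then show "p \<in> UNIV \<times> {..<N}" using N by (cases p) (meson SigmaI UNIV_I lessThan_iff not_le)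
      qed
      then have l1: "le A (UNIV \<times> {..<N})" by (rule sub_le[OF bounded_layers[OF clopen_UNIV] _ cA])
      have "B \<noteq> {}" using zA h(4) by blast
      then obtain b m where bm: "(b, m) \<in> B" by auto
      define Bm where "Bm = {x. (x, m) \<in> B}"
      have cBm: "clopen_set Bm" unfolding Bm_def using cB by (rule slice_clopen)
      have nBm: "Bm \<noteq> {}" using bm unfolding Bm_def by auto
      have l3: "le (UNIV \<times> {0}) (Bm \<times> {0})" using DC'[OF clopen_UNIV cBm _ nBm] by simp
      have "Bm \<times> {m} \<subseteq> B" unfolding Bm_def by auto
      then have l4: "le (Bm \<times> {0}) B" unfolding le_def using h(2) shift_pw[OF cBm, of 0 m] by blast
      have "le A B" using le_trans[OF le_trans[OF le_trans[OF l1 stack] l3] l4] .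
      then show ?thesis by (rule le_type_le)
    qed
    show "minimal_action G \<alpha> \<and>
     (\<forall>A B. bounded_clopen A \<and> bounded_clopen B \<and> \<not> type_zero G \<alpha> A \<and> \<not> type_zero G \<alpha> B
        \<longrightarrow> type_le G \<alpha> A B)" using minimal part2 by blast
  next
    assume H: "minimal_action G \<alpha> \<and>
     (\<forall>A B. bounded_clopen A \<and> bounded_clopen B \<and> \<not> type_zero G \<alpha> A \<and> \<not> type_zero G \<alpha> B
        \<longrightarrow> type_le G \<alpha> A B)"
    show "dynamical_comparison G \<alpha>"
      unfolding dynamical_comparison_def
    proof (intro allI impI, elim conjE)
      fix A B :: "'x set"
      assume "clopen_set A" "clopen_set B" "A \<noteq> {}" "B \<noteq> {}"
      moreover have "A \<times> {0::nat} \<noteq> {}" "B \<times> {0::nat} \<noteq> {}" using calculation by auto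
      ultimately have "bounded_clopen (A \<times> {0})" "bounded_clopen (B \<times> {0})"
        "\<not> type_zero G \<alpha> (A \<times> {0})" "\<not> type_zero G \<alpha> (B \<times> {0})"
        using bounded_layer nz by auto
      then show "type_le G \<alpha> (A \<times> {0}) (B \<times> {0})" using H by blast
    qed
  qed
qed

end
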